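(* Let $X\in[0,1]^{N\times N}$, let $Q_{2D}(X)$ be the two-dimensional first-order $\Sigma\Delta$ quantization of $X$ with an alphabet of step size $\delta$, whose state matrix $u$ satisfies $X-Q_{2D}(X)=DuD^T$ and $\|u\|_{\max}\leq\delta/2$, and let $\hat X$ be a solution to $$\min_{Z\in\mathbb{R}^{N\times N}}\|D^TZ\|_1+\|ZD\|_1\quad\text{subject to}\quad\|D^{-1}(Z-Q_{2D}(X))(D^{-1})^T\|_{\max}\leq\delta/2.$$ Then for every integer $1\leq s\leq N^2$, $$\|\hat X-X\|_F\leq C\Big(\sqrt{s}\sqrt{\delta}+\sqrt{\sigma_s(D^TX)}+\sqrt{\sigma_s(XD)}\Big)\sqrt{\delta},$$ where $C$ is a constant independent of $X$.
   Context: $D$ is the $N\times N$ matrix with $1$ on the diagonal, $-1$ on the subdiagonal, $0$ elsewhere. For matrices, $\|\cdot\|_1$ is the entrywise $\ell_1$ norm and $\|\cdot\|_{\max}$ the largest absolute entry; for a matrix $Z$, $\sigma_s(Z)$ is the $\ell_1$ distance between the vectorization of $Z$ and its best $s$-term approximation. The two-dimensional first-order $\Sigma\Delta$ quantization with a finite alphabet $\mathcal{A}$: with $u_{i,0}=u_{0,j}=0$, for $i,j\geq1$ set $q_{i,j}=Q_{\mathcal{A}}(u_{i,j-1}+u_{i-1,j}-u_{i-1,j-1}+X_{i,j})$ and $u_{i,j}=u_{i,j-1}+u_{i-1,j}-u_{i-1,j-1}+X_{i,j}-q_{i,j}$, $Q_{\mathcal{A}}(z)$ a nearest element of $\mathcal{A}$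 to $z$; $Q_{2D}(X)=q$. The alphabet is assumed such that $\|u\|_{\max}\leq\delta/2$. *)

theory Defs
  imports Complex_Main
begin

text \<open>N x N matrices are represented as functions nat \<Rightarrow> nat \<Rightarrow> real,
 indexed by 1..N (entries outside this range are irrelevant for every notion below).\<close>

definition Dmat :: "nat \<Rightarrow> nat \<Rightarrow> real" where
  "Dmat i j = (if i = j then 1 else if i = Suc j then -1 else 0)"

definition Dinv :: "nat \<Rightarrow> nat \<Rightarrow> real" where
  "Dinv i j = (if j \<le> i then 1 else 0)"

definition mmult :: "nat \<Rightarrow> (nat \<Rightarrow> nat \<Rightarrow> real) \<Rightarrow> (nat \<Rightarrow> nat \<Rightarrow> real) \<Rightarrow> nat \<Rightarrow> nat \<Rightarrow> real" where
  "mmult N A B = (\<lambda>i j. \<Sum>k=1..N. A i k * B k j)"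

definition mtr :: "(nat \<Rightarrow> nat \<Rightarrow> real) \<Rightarrow> nat \<Rightarrow> nat \<Rightarrow> real" where
  "mtr A = (\<lambda>i j. A j i)"

definition mdiff :: "(nat \<Rightarrow> nat \<Rightarrow> real) \<Rightarrow> (nat \<Rightarrow> nat \<Rightarrow> real) \<Rightarrow> nat \<Rightarrow> nat \<Rightarrow> real" where
  "mdiff A B = (\<lambda>i j. A i j - B i j)"

definition l1norm :: "nat \<Rightarrow> (nat \<Rightarrow> nat \<Rightarrow> real) \<Rightarrow> real" where
  "l1norm N Z = (\<Sum>i=1..N. \<Sum>j=1..N. \<bar>Z i j\<bar>)"

definition maxnorm :: "nat \<Rightarrow> (nat \<Rightarrow> nat \<Rightarrow> real) \<Rightarrow> real" where
  "maxnorm N Z = Max (insert 0 {\<bar>Z i j\<bar> | i j. i \<in> {1..N} \<and> j \<in> {1..N}})"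

definition frob :: "nat \<Rightarrow> (nat \<Rightarrow> nat \<Rightarrow> real) \<Rightarrow> real" where
  "frob N Z = sqrt (\<Sum>i=1..N. \<Sum>j=1..N. (Z i j)\<^sup>2)"

definition sigma_s :: "nat \<Rightarrow> nat \<Rightarrow> (nat \<Rightarrow> nat \<Rightarrow> real) \<Rightarrow> real" where
  "sigma_s N s Z = Inf {l1norm N (mdiff Z Y) | Y.
      card {(i,j) \<in> {1..N} \<times> {1..N}. Y i j \<noteq> 0} \<le> s}"

text \<open>Two-dimensional first-order Sigma-Delta quantization with scalar quantizer QA.
 sd_state QA X i j is the state u_{i,j}; sd_q the output q_{i,j}.\<close>
fun sd_state :: "(real \<Rightarrow> real) \<Rightarrow> (nat \<Rightarrow> nat \<Rightarrow> real) \<Rightarrow> nat \<Rightarrow> nat \<Rightarrow> real" where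
  "sd_state QA X 0 j = 0"
| "sd_state QA X (Suc i) 0 = 0"
| "sd_state QA X (Suc i) (Suc j) =
     (let v = sd_state QA X (Suc i) j + sd_state QA X i (Suc j) - sd_state QA X i j + X (Suc i) (Suc j)
      in v - QA v)"

definition sd_q :: "(real \<Rightarrow> real) \<Rightarrow> (nat \<Rightarrow> nat \<Rightarrow> real) \<Rightarrow> nat \<Rightarrow> nat \<Rightarrow> real" where
  "sd_q QA X i j = QA (sd_state QA X i (j - 1) + sd_state QA X (i - 1) j
                        - sd_state QA X (i - 1) (j - 1) + X i j)"

definition nearest_quantizer :: "real set \<Rightarrow> (real \<Rightarrow> real) \<Rightarrow> bool" where
  "nearest_quantizer A QA \<longleftrightarrow> (\<forall>z. QA z \<in> A \<and> (\<forall>a\<in>A. \<bar>z - QA z\<bar> \<le> \<bar>z - a\<bar>))"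

definition step_alphabet :: "real \<Rightarrow> real set \<Rightarrow> bool" where
  "step_alphabet \<delta> A \<longleftrightarrow> (\<exists>a0 (L::nat). A = (\<lambda>k. a0 + real k * \<delta>) ` {0..L})"

definition tv_obj :: "nat \<Rightarrow> (nat \<Rightarrow> nat \<Rightarrow> real) \<Rightarrow> real" where
  "tv_obj N Z = l1norm N (mmult N (mtr Dmat) Z) + l1norm N (mmult N Z Dmat)"

definition feasible :: "nat \<Rightarrow> real \<Rightarrow> (nat \<Rightarrow> nat \<Rightarrow> real) \<Rightarrow> (nat \<Rightarrow> nat \<Rightarrow> real) \<Rightarrow> bool" where
  "feasible N \<delta> q Z \<longleftrightarrow> maxnorm N (mmult N (mmult N Dinv (mdiff Z q)) (mtr Dinv)) \<le> \<delta> / 2"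

end

theory Submission
  imports Defs
begin


lemma mmult_assoc: "mmult N (mmult N A B) C = mmult N A (mmult N B C)"
proof (intro ext)
  fix i j
  have "(\<Sum>l=1..N. (\<Sum>k=1..N. A i k * B k l) * C l j) = (\<Sum>l=1..N. \<Sum>k=1..N. A i k * (B k l * C l j))"
    by (simp add: sum_distrib_right mult.assoc)
  also have "\<dots> = (\<Sum>k=1..N. \<Sum>l=1..N. A i k * (B k l * C l j))" by (rule sum.swap)
  also have "\<dots> = (\<Sum>k=1..N. A i k * (\<Sum>l=1..N. B k l * C l j))" by (simp add: sum_distrib_left)
  finally show "mmult N (mmult N A B) C i j = mmult N A (mmult N B C) i j" by (simp add: mmult_def)
qed

lemma mmult_diff_right: "mmult N A (mdiff B C) = mdiff (mmult N A B) (mmult N A C)"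
  by (auto simp: mmult_def mdiff_def right_diff_distrib sum_subtractf intro!: ext)
lemma mmult_diff_left: "mmult N (mdiff A B) C = mdiff (mmult N A C) (mmult N B C)"
  by (auto simp: mmult_def mdiff_def left_diff_distrib sum_subtractf intro!: ext)
lemma mmult_add_right: "mmult N A (\<lambda>i j. B i j + C i j) = (\<lambda>i j. mmult N A B i j + mmult N A C i j)"
  by (auto simp: mmult_def distrib_left sum.distrib intro!: ext)
lemma mmult_add_left: "mmult N (\<lambda>i j. A i j + B i j) C = (\<lambda>i j. mmult N A C i j + mmult N B C i j)"
  by (auto simp: mmult_def distrib_right sum.distrib intro!: ext)

lemma cong_right: "(\<And>k. k \<in> {1..N} \<Longrightarrow> B k j = B' k j) \<Longrightarrow> mmult N A B i j = mmult N A B' i j"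
  by (simp add: mmult_def)
lemma cong_left: "(\<And>k. k \<in> {1..N} \<Longrightarrow> A i k = A' i k) \<Longrightarrow> mmult N A B i j = mmult N A' B i j"
  by (simp add: mmult_def)

lemma id_left: assumes "\<And>i k. i \<in> {1..N} \<Longrightarrow> k \<in> {1..N} \<Longrightarrow> M i k = (if i = k then 1 else 0)"
  and "i \<in> {1..N}" shows "mmult N M A i j = A i j"
proof -
  have "mmult N M A i j = (\<Sum>k=1..N. if i = k then A k j else 0)"
    unfolding mmult_def using assms by (intro sum.cong) auto
  also have "\<dots> = A i j" using assms(2) by simp
  finally show ?thesis .
qed

lemma id_right: assumes "\<And>k j. k \<in> {1..N} \<Longrightarrow> j \<in> {1..N} \<Longrightarrow> M k j = (if k = j then 1 else 0)"
  and "j \<in> {1..N}" shows "mmult N A M i j = A i j"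
proof -
  have "mmult N A M i j = (\<Sum>k=1..N. if k = j then A i k else 0)"
    unfolding mmult_def using assms by (intro sum.cong) auto
  also have "\<dots> = A i j" using assms(2) by simp
  finally show ?thesis .
qed

lemma D_Dinv: assumes "i \<in> {1..N}" "j \<in> {1..N}"
  shows "mmult N Dmat Dinv i j = (if i = j then 1 else 0)"
proof -
  have "mmult N Dmat Dinv i j = (\<Sum>k=1..N. (if k = i then Dinv k j else 0) - (if Suc k = i then Dinv k j else 0))"
    unfolding mmult_def by (intro sum.cong) (auto simp: Dmat_def)
  also have "\<dots> = Dinv i j - (\<Sum>k=1..N. if k = i - 1 then Dinv k j else 0)"
  proof -
    have "(\<Sum>k=1..N. if Suc k = i then Dinv k j else 0) = (\<Sum>k=1..N. if k = i - 1 then Dinv k j else 0)"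
      using assms by (intro sum.cong) auto
    then show ?thesis using assms by (simp add: sum_subtractf)
  qed
  also have "\<dots> = (if i = j then 1 else 0)"
    using assms by (cases "i = 1") (auto simp: Dinv_def)
  finally show ?thesis .
qed

lemma Dinv_D: assumes "i \<in> {1..N}" "j \<in> {1..N}"
  shows "mmult N Dinv Dmat i j = (if i = j then 1 else 0)"
proof -
  have "mmult N Dinv Dmat i j = (\<Sum>k=1..N. (if k = j then Dinv i k else 0) - (if k = Suc j then Dinv i k else 0))"
    unfolding mmult_def by (intro sum.cong) (auto simp: Dmat_def)
  also have "\<dots> = Dinv i j - (if Suc j \<le> N then Dinv i (Suc j) else 0)"
    using assms by (simp add: sum_subtractf)
  also have "\<dots> = (if i = j then 1 else 0)"
    using assms by (auto simp: Dinv_def)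
  finally show ?thesis .
qed

lemma Dt_Dinvt: assumes "i \<in> {1..N}" "j \<in> {1..N}"
  shows "mmult N (mtr Dmat) (mtr Dinv) i j = (if i = j then 1 else 0)"
proof -
  have "mmult N (mtr Dmat) (mtr Dinv) i j = mmult N Dinv Dmat j i"
    by (simp add: mmult_def mtr_def mult.commute)
  then show ?thesis using Dinv_D[OF assms(2,1)] by auto
qed

lemma Dinvt_Dt: assumes "i \<in> {1..N}" "j \<in> {1..N}"
  shows "mmult N (mtr Dinv) (mtr Dmat) i j = (if i = j then 1 else 0)"
proof -
  have "mmult N (mtr Dinv) (mtr Dmat) i j = mmult N Dmat Dinv j i"
    by (simp add: mmult_def mtr_def mult.commute)
  then show ?thesis using D_Dinv[OF assms(2,1)] by auto
qed

lemma D_row: "(\<Sum>k=1..N. \<bar>Dmat i k\<bar>) \<le> 2"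
proof -
  have "(\<Sum>k=1..N. \<bar>Dmat i k\<bar>) \<le> (\<Sum>k=1..N. (if k = i then 1 else 0) + (if k = i - 1 then 1 else 0))"
    by (intro sum_mono) (auto simp: Dmat_def)
  also have "\<dots> \<le> 2" by (simp add: sum.distrib)
  finally show ?thesis .
qed

lemma D_col: "(\<Sum>k=1..N. \<bar>Dmat k j\<bar>) \<le> 2"
proof -
  have "(\<Sum>k=1..N. \<bar>Dmat k j\<bar>) \<le> (\<Sum>k=1..N. (if k = j then 1 else 0) + (if k = Suc j then 1 else 0))"
    by (intro sum_mono) (auto simp: Dmat_def)
  also have "\<dots> \<le> 2" by (simp add: sum.distrib)
  finally show ?thesis .
qed

lemma bnd_left: assumes "\<And>k. k \<in> {1..N} \<Longrightarrow> \<bar>B k j\<bar> \<le> b" "(\<Sum>k=1..N. \<bar>A i k\<bar>) \<le> a" "b \<ge> 0"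
  shows "\<bar>mmult N A B i j\<bar> \<le> a * b"
proof -
  have "\<bar>mmult N A B i j\<bar> \<le> (\<Sum>k=1..N. \<bar>A i k\<bar> * \<bar>B k j\<bar>)"
    unfolding mmult_def by (rule order.trans[OF sum_abs]) (simp add: abs_mult)
  also have "\<dots> \<le> (\<Sum>k=1..N. \<bar>A i k\<bar> * b)" using assms(1) by (intro sum_mono mult_left_mono) auto
  also have "\<dots> = (\<Sum>k=1..N. \<bar>A i k\<bar>) * b" by (simp add: sum_distrib_right)
  also have "\<dots> \<le> a * b" using assms by (intro mult_right_mono) auto
  finally show ?thesis .
qed

lemma bnd_right: assumes "\<And>k. k \<in> {1..N} \<Longrightarrow> \<bar>A i k\<bar> \<le> a" "(\<Sum>k=1..N. \<bar>B k j\<bar>) \<le> b" "a \<ge> 0"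
  shows "\<bar>mmult N A B i j\<bar> \<le> a * b"
proof -
  have "\<bar>mmult N A B i j\<bar> \<le> (\<Sum>k=1..N. \<bar>A i k\<bar> * \<bar>B k j\<bar>)"
    unfolding mmult_def by (rule order.trans[OF sum_abs]) (simp add: abs_mult)
  also have "\<dots> \<le> (\<Sum>k=1..N. a * \<bar>B k j\<bar>)" using assms(1) by (intro sum_mono mult_right_mono) auto
  also have "\<dots> = a * (\<Sum>k=1..N. \<bar>B k j\<bar>)" by (simp add: sum_distrib_left)
  also have "\<dots> \<le> a * b" using assms by (intro mult_left_mono) auto
  finally show ?thesis .
qed



lemma maxnorm_set: "{\<bar>Z i j\<bar> | i j. i \<in> {1..N} \<and> j \<in> {1..N}} = (\<lambda>(i,j). \<bar>Z i j\<bar>) ` ({1..N} \<times> {1..N})"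
  by force

lemma maxnorm_ge: "i \<in> {1..N} \<Longrightarrow> j \<in> {1..N} \<Longrightarrow> \<bar>Z i j\<bar> \<le> maxnorm N Z"
  unfolding maxnorm_def maxnorm_set by (rule Max_ge) (auto intro!: imageI)

lemma maxnorm_cong: "(\<And>i j. i \<in> {1..N} \<Longrightarrow> j \<in> {1..N} \<Longrightarrow> Z i j = Z' i j) \<Longrightarrow> maxnorm N Z = maxnorm N Z'"
  unfolding maxnorm_def maxnorm_set
  by (intro arg_cong[where f=Max] arg_cong[where f="insert 0"] image_cong) auto

definition inner :: "nat \<Rightarrow> (nat \<Rightarrow> nat \<Rightarrow> real) \<Rightarrow> (nat \<Rightarrow> nat \<Rightarrow> real) \<Rightarrow> real" where
  "inner N A B = (\<Sum>i=1..N. \<Sum>j=1..N. A i j * B i j)"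

lemma inner_right: "inner N P (mmult N B C) = inner N (mmult N P (mtr C)) B"
proof -
  have "inner N P (mmult N B C) = (\<Sum>i=1..N. \<Sum>j=1..N. \<Sum>k=1..N. P i j * B i k * C k j)"
    by (simp add: inner_def mmult_def sum_distrib_left mult.assoc)
  also have "\<dots> = (\<Sum>i=1..N. \<Sum>k=1..N. \<Sum>j=1..N. P i j * B i k * C k j)"
    by (intro sum.cong refl sum.swap)
  also have "\<dots> = (\<Sum>i=1..N. \<Sum>k=1..N. (\<Sum>j=1..N. P i j * C k j) * B i k)"
    by (intro sum.cong refl) (simp add: sum_distrib_right sum_distrib_left mult_ac)
  also have "\<dots> = inner N (mmult N P (mtr C)) B"
    by (simp add: inner_def mmult_def mtr_def)
  finally show ?thesis .
qed

lemma inner_left: "inner N W (mmult N A B) = inner N (mmult N (mtr A) W) B"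
proof -
  have "inner N W (mmult N A B) = (\<Sum>i=1..N. \<Sum>j=1..N. \<Sum>k=1..N. W i j * A i k * B k j)"
    by (simp add: inner_def mmult_def sum_distrib_left mult.assoc)
  also have "\<dots> = (\<Sum>i=1..N. \<Sum>k=1..N. \<Sum>j=1..N. W i j * A i k * B k j)"
    by (intro sum.cong refl sum.swap)
  also have "\<dots> = (\<Sum>k=1..N. \<Sum>i=1..N. \<Sum>j=1..N. W i j * A i k * B k j)"
    by (rule sum.swap)
  also have "\<dots> = (\<Sum>k=1..N. \<Sum>j=1..N. \<Sum>i=1..N. W i j * A i k * B k j)"
    by (intro sum.cong refl sum.swap)
  also have "\<dots> = (\<Sum>k=1..N. \<Sum>j=1..N. (\<Sum>i=1..N. A i k * W i j) * B k j)"
    by (intro sum.cong refl) (simp add: sum_distrib_right sum_distrib_left mult_ac)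
  also have "\<dots> = inner N (mmult N (mtr A) W) B"
    by (simp add: inner_def mmult_def mtr_def)
  finally show ?thesis .
qed

lemma inner_bound: assumes "\<And>i j. i \<in> {1..N} \<Longrightarrow> j \<in> {1..N} \<Longrightarrow> \<bar>V i j\<bar> \<le> d"
  shows "inner N M V \<le> d * l1norm N M"
proof -
  have "inner N M V \<le> (\<Sum>i=1..N. \<Sum>j=1..N. d * \<bar>M i j\<bar>)"
    unfolding inner_def
  proof (intro sum_mono)
    fix i j assume "i \<in> {1..N}" "j \<in> {1..N}"
    then have "\<bar>V i j\<bar> \<le> d" by (rule assms)
    then have "M i j * V i j \<le> \<bar>M i j\<bar> * d"
      by (metis abs_ge_self abs_mult abs_ge_zero mult_left_mono order_trans)
    then show "M i j * V i j \<le> d * \<bar>M i j\<bar>" by (simp add: mult.commute)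
  qed
  also have "\<dots> = d * l1norm N M" by (simp add: l1norm_def sum_distrib_left)
  finally show ?thesis .
qed

lemma l1_mtr: "l1norm N (mtr A) = l1norm N A"
  unfolding l1norm_def mtr_def by (rule sum.swap)

lemma mtr_mmult: "mtr (mmult N A B) = mmult N (mtr B) (mtr A)"
  by (auto simp: mtr_def mmult_def mult.commute intro!: ext)

lemma mtr_mtr[simp]: "mtr (mtr A) = A" by (simp add: mtr_def)

lemma l1_right: assumes "\<And>k. k \<in> {1..N} \<Longrightarrow> (\<Sum>j=1..N. \<bar>M k j\<bar>) \<le> b"
  shows "l1norm N (mmult N P M) \<le> b * l1norm N P"
proof -
  have "l1norm N (mmult N P M) \<le> (\<Sum>i=1..N. \<Sum>j=1..N. \<Sum>k=1..N. \<bar>P i k\<bar> * \<bar>M k j\<bar>)"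
    unfolding l1norm_def mmult_def
    by (intro sum_mono order.trans[OF sum_abs]) (simp add: abs_mult)
  also have "\<dots> = (\<Sum>i=1..N. \<Sum>k=1..N. \<Sum>j=1..N. \<bar>P i k\<bar> * \<bar>M k j\<bar>)"
    by (intro sum.cong refl sum.swap)
  also have "\<dots> = (\<Sum>i=1..N. \<Sum>k=1..N. \<bar>P i k\<bar> * (\<Sum>j=1..N. \<bar>M k j\<bar>))"
    by (simp add: sum_distrib_left)
  also have "\<dots> \<le> (\<Sum>i=1..N. \<Sum>k=1..N. \<bar>P i k\<bar> * b)"
    using assms by (intro sum_mono mult_left_mono) auto
  also have "\<dots> = b * l1norm N P"
    by (simp add: l1norm_def sum_distrib_left sum_distrib_right mult_ac)
  finally show ?thesis .
qed

lemma l1_left: assumes "\<And>k. k \<in> {1..N} \<Longrightarrow> (\<Sum>i=1..N. \<bar>M i k\<bar>) \<le> b"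
  shows "l1norm N (mmult N M Q) \<le> b * l1norm N Q"
proof -
  have "l1norm N (mmult N M Q) = l1norm N (mmult N (mtr Q) (mtr M))"
    by (metis l1_mtr mtr_mmult)
  also have "\<dots> \<le> b * l1norm N (mtr Q)"
    by (rule l1_right) (use assms in \<open>simp add: mtr_def\<close>)
  finally show ?thesis by (simp add: l1_mtr)
qed

lemma supp_sum: fixes Y :: "nat \<Rightarrow> nat \<Rightarrow> real" shows "(\<Sum>i=1..(N::nat). \<Sum>j=1..N. (if Y i j \<noteq> 0 then 1 else 0::real))
   = real (card {(i,j) \<in> {1..N} \<times> {1..N}. Y i j \<noteq> 0})"
proof -
  have "(\<Sum>i=1..N. \<Sum>j=1..N. (if Y i j \<noteq> 0 then 1 else 0::real))
      = (\<Sum>p\<in>{1..N} \<times> {1..N}. (if Y (fst p) (snd p) \<noteq> 0 then 1 else 0::real))"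
    by (simp add: sum.cartesian_product split_def)
  also have "\<dots> = (\<Sum>p\<in>{p \<in> {1..N} \<times> {1..N}. Y (fst p) (snd p) \<noteq> 0}. 1)"
    by (subst sum.inter_filter[symmetric]) (auto simp del: atLeastAtMost_iff)
  also have "{p \<in> {1..N} \<times> {1..N}. Y (fst p) (snd p) \<noteq> 0} = {(i,j) \<in> {1..N} \<times> {1..N}. Y i j \<noteq> 0}"
    by auto
  finally show ?thesis by simp
qed

lemma cone: assumes "\<And>i j. i \<in> {1..N} \<Longrightarrow> j \<in> {1..N} \<Longrightarrow> \<bar>w i j\<bar> \<le> c" "c \<ge> 0"
  and "card {(i,j) \<in> {1..N} \<times> {1..N}. Y i j \<noteq> 0} \<le> s"
  shows "l1norm N w \<le> l1norm N (\<lambda>i j. x i j + w i j) - l1norm N x + 2 * l1norm N (mdiff x Y) + 2 * c * real s"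
proof -
  have pt: "\<bar>w i j\<bar> \<le> \<bar>x i j + w i j\<bar> - \<bar>x i j\<bar> + 2 * \<bar>mdiff x Y i j\<bar> + 2 * c * (if Y i j \<noteq> 0 then 1 else 0)"
    if "i \<in> {1..N}" "j \<in> {1..N}" for i j
  proof (cases "Y i j = 0")
    case True
    then show ?thesis using abs_triangle_ineq4[of "x i j + w i j" "x i j"] by (simp add: mdiff_def)
  next
    case False
    have t: "\<bar>x i j\<bar> \<le> \<bar>x i j + w i j\<bar> + \<bar>w i j\<bar>"
      using abs_triangle_ineq4[of "x i j + w i j" "w i j"] by simp
    have z: "0 \<le> \<bar>x i j - Y i j\<bar>" by simp
    have o: "(if Y i j \<noteq> 0 then 1 else 0) = (1::real)" using False by simp
    show ?thesis unfolding mdiff_def o using t z assms(1)[OF that] by smt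
  qed
  have "l1norm N w \<le> (\<Sum>i=1..N. \<Sum>j=1..N. \<bar>x i j + w i j\<bar> - \<bar>x i j\<bar> + 2 * \<bar>mdiff x Y i j\<bar> + 2 * c * (if Y i j \<noteq> 0 then 1 else 0))"
    unfolding l1norm_def by (intro sum_mono pt) auto
  also have "\<dots> = l1norm N (\<lambda>i j. x i j + w i j) - l1norm N x + 2 * l1norm N (mdiff x Y)
      + 2 * c * (\<Sum>i=1..N. \<Sum>j=1..N. (if Y i j \<noteq> 0 then 1 else 0::real))"
    by (simp add: l1norm_def sum.distrib sum_subtractf sum_distrib_left)
  also have "\<dots> \<le> l1norm N (\<lambda>i j. x i j + w i j) - l1norm N x + 2 * l1norm N (mdiff x Y) + 2 * c * real s"
    unfolding supp_sum using assms(2,3) by (intro add_left_mono mult_left_mono) auto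
  finally show ?thesis .
qed



lemma final_arith:
  fixes F2 d s1 s2 :: real and s :: nat
  assumes "d > 0" "s1 \<ge> 0" "s2 \<ge> 0" "F2 \<le> d * (32 * d * real s + 2 * s1 + 2 * s2)"
  shows "sqrt F2 \<le> 6 * (sqrt (real s) * sqrt d + sqrt s1 + sqrt s2) * sqrt d"
proof -
  define a where "a = sqrt (real s) * sqrt d"
  define b where "b = sqrt s1"
  define c where "c = sqrt s2"
  have a0: "a \<ge> 0" and b0: "b \<ge> 0" and c0: "c \<ge> 0" using assms by (auto simp: a_def b_def c_def)
  have a2: "a^2 = real s * d" using assms(1) by (simp add: a_def power_mult_distrib)
  have b2: "b^2 = s1" using assms(2) by (simp add: b_def)
  have c2: "c^2 = s2" using assms(3) by (simp add: c_def)
  have d2: "(sqrt d)^2 = d" using assms(1) by simp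
  have "(6 * (a + b + c) * sqrt d)^2 = 36 * (a + b + c)^2 * (sqrt d)^2"
    by (simp only: power_mult_distrib) simp
  also have "\<dots> = 36 * d * (a + b + c)^2" using d2 by simp
  also have "\<dots> \<ge> 36 * d * (a^2 + b^2 + c^2)"
  proof -
    have "(a + b + c)^2 \<ge> a^2 + b^2 + c^2" using a0 b0 c0 by (simp add: power2_eq_square algebra_simps)
    then show ?thesis using assms(1) by (intro mult_left_mono) auto
  qed
  finally have "36 * d * (a^2 + b^2 + c^2) \<le> (6 * (a + b + c) * sqrt d)^2" .
  moreover have "F2 \<le> 36 * d * (a^2 + b^2 + c^2)"
  proof -
    have "32 * d * real s + 2 * s1 + 2 * s2 \<le> 36 * (a^2 + b^2 + c^2)"
      using a2 b2 c2 assms(1-3) by simp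
    then have "d * (32 * d * real s + 2 * s1 + 2 * s2) \<le> d * (36 * (a^2 + b^2 + c^2))"
      using assms(1) by (intro mult_left_mono) auto
    then show ?thesis using assms(4) by (simp add: mult_ac)
  qed
  ultimately have "F2 \<le> (6 * (a + b + c) * sqrt d)^2" by linarith
  then show ?thesis unfolding a_def[symmetric] b_def[symmetric] c_def[symmetric]
    using a0 b0 c0 assms(1) by (intro real_le_lsqrt) auto
qed

lemma inf2:
  fixes S1 S2 :: "real set"
  assumes "S1 \<noteq> {}" "S2 \<noteq> {}" "\<And>a b. a \<in> S1 \<Longrightarrow> b \<in> S2 \<Longrightarrow> K \<le> 2 * a + 2 * b"
  shows "K \<le> 2 * Inf S1 + 2 * Inf S2"
proof -
  have "(K - 2 * a) / 2 \<le> Inf S2" if "a \<in> S1" for a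
    using assms(2) by (rule cInf_greatest) (use assms(3)[OF that] in force)
  then have "(K - 2 * Inf S2) / 2 \<le> Inf S1"
    using assms(1) by (intro cInf_greatest) (auto simp: field_simps)
  then show ?thesis by simp
qed

lemma sigma_ne: "{l1norm N (mdiff Z Y) | Y. card {(i,j) \<in> {1..N} \<times> {1..N}. Y i j \<noteq> 0} \<le> s} \<noteq> {}"
proof -
  have "l1norm N (mdiff Z (\<lambda>i j. 0)) \<in> {l1norm N (mdiff Z Y) | Y. card {(i,j) \<in> {1..N} \<times> {1..N}. Y i j \<noteq> 0} \<le> s}"
    by auto
  then show ?thesis by blast
qed

lemma l1_nonneg: "l1norm N Z \<ge> 0"
  unfolding l1norm_def by (intro sum_nonneg) auto

lemma sigma_nonneg: "sigma_s N s Z \<ge> 0"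
  unfolding sigma_s_def using sigma_ne by (intro cInf_greatest) (auto simp: l1_nonneg)

lemma sigma_ge: "card {(i,j) \<in> {1..N} \<times> {1..N}. Y i j \<noteq> 0} \<le> s \<Longrightarrow> sigma_s N s Z \<le> l1norm N (mdiff Z Y)"
  unfolding sigma_s_def
  by (rule cInf_lower) (auto intro!: bdd_belowI[where m=0] simp: l1_nonneg)



lemma sd_main_bound:
  fixes N :: nat and \<delta> :: real and X Xh q u :: "nat \<Rightarrow> nat \<Rightarrow> real" and s :: nat
  assumes dpos: "\<delta> > 0"
  and hq: "\<forall>i\<in>{1..N}. \<forall>j\<in>{1..N}. mdiff X q i j = mmult N (mmult N Dmat u) (mtr Dmat) i j"
  and hu: "maxnorm N u \<le> \<delta> / 2"
  and fXh: "feasible N \<delta> q Xh"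
  and opt: "\<forall>Z. feasible N \<delta> q Z \<longrightarrow> tv_obj N Xh \<le> tv_obj N Z"
    "1 \<le> s" "s \<le> N\<^sup>2"
  shows "frob N (mdiff Xh X)
        \<le> 6 * (sqrt (real s) * sqrt \<delta> + sqrt (sigma_s N s (mmult N (mtr Dmat) X))
                + sqrt (sigma_s N s (mmult N X Dmat))) * sqrt \<delta>"
proof -
  define R where "R = {1..N}"
  define PP where "PP Z = mmult N (mmult N Dinv (mdiff Z q)) (mtr Dinv)" for Z
  define W where "W = mdiff Xh X"
  define V where "V = mmult N (mmult N Dinv W) (mtr Dinv)"
  have PX: "PP X i j = u i j" if "i \<in> {1..N}" "j \<in> {1..N}" for i j
  proof -
    have "PP X i j = mmult N (mmult N Dinv (mmult N (mmult N Dmat u) (mtr Dmat))) (mtr Dinv) i j"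
      unfolding PP_def
      by (intro cong_left cong_right) (use hq that in auto)
    also have "\<dots> = mmult N (mmult N Dinv Dmat) (mmult N u (mmult N (mtr Dmat) (mtr Dinv))) i j"
      by (simp add: mmult_assoc)
    also have "\<dots> = mmult N u (mmult N (mtr Dmat) (mtr Dinv)) i j"
      by (rule id_left[OF Dinv_D that(1)])
    also have "\<dots> = u i j"
      by (rule id_right[OF Dt_Dinvt that(2)])
    finally show ?thesis .
  qed
  have fX: "feasible N \<delta> q X"
    unfolding feasible_def PP_def[symmetric]
    using hu maxnorm_cong[of N "PP X" u] PX by simp
  have tv: "tv_obj N Xh \<le> tv_obj N X" using opt fX by blast
  have Vd: "V = mdiff (PP Xh) (PP X)"
  proof -
    have "W = mdiff (mdiff Xh q) (mdiff X q)" by (auto simp: W_def mdiff_def intro!: ext)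
    then show ?thesis unfolding V_def PP_def by (simp add: mmult_diff_right mmult_diff_left)
  qed
  have Vb: "\<bar>V i j\<bar> \<le> \<delta>" if "i \<in> {1..N}" "j \<in> {1..N}" for i j
  proof -
    have "\<bar>PP Xh i j\<bar> \<le> \<delta> / 2"
      using maxnorm_ge[OF that, of "PP Xh"] fXh unfolding feasible_def PP_def by simp
    moreover have "\<bar>PP X i j\<bar> \<le> \<delta> / 2"
      using maxnorm_ge[OF that, of u] hu PX[OF that] by simp
    ultimately show ?thesis unfolding Vd mdiff_def by simp
  qed
  have WV: "mmult N (mmult N Dmat V) (mtr Dmat) i j = W i j" if "i \<in> {1..N}" "j \<in> {1..N}" for i j
  proof -
    have "mmult N (mmult N Dmat V) (mtr Dmat) i j
        = mmult N (mmult N Dmat Dinv) (mmult N W (mmult N (mtr Dinv) (mtr Dmat))) i j"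
      unfolding V_def by (simp add: mmult_assoc)
    also have "\<dots> = mmult N W (mmult N (mtr Dinv) (mtr Dmat)) i j"
      by (rule id_left[OF D_Dinv that(1)])
    also have "\<dots> = W i j"
      by (rule id_right[OF Dinvt_Dt that(2)])
    finally show ?thesis .
  qed
  have DVb: "\<bar>mmult N Dmat V i k\<bar> \<le> 2 * \<delta>" if "k \<in> {1..N}" for i k
  proof (rule bnd_left)
    show "\<bar>V k' k\<bar> \<le> \<delta>" if "k' \<in> {1..N}" for k' using Vb[OF that \<open>k \<in> {1..N}\<close>] .
  qed (use dpos D_row in auto)
  have Wb: "\<bar>W i j\<bar> \<le> 4 * \<delta>" if "i \<in> {1..N}" "j \<in> {1..N}" for i j
  proof -
    have "\<bar>mmult N (mmult N Dmat V) (mtr Dmat) i j\<bar> \<le> (2 * \<delta>) * 2"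
    proof (rule bnd_right)
      show "\<bar>mmult N Dmat V i k\<bar> \<le> 2 * \<delta>" if "k \<in> {1..N}" for k using DVb[OF that] .
      show "(\<Sum>k=1..N. \<bar>mtr Dmat k j\<bar>) \<le> 2" using D_row[where i=j and N=N] by (simp add: mtr_def)
    qed (use dpos in auto)
    then show ?thesis using WV[OF that] by simp
  qed
  have DtWb: "\<bar>mmult N (mtr Dmat) W i j\<bar> \<le> 8 * \<delta>" if "i \<in> {1..N}" "j \<in> {1..N}" for i j
  proof -
    have "\<bar>mmult N (mtr Dmat) W i j\<bar> \<le> 2 * (4 * \<delta>)"
    proof (rule bnd_left)
      show "\<bar>W k j\<bar> \<le> 4 * \<delta>" if "k \<in> {1..N}" for k using Wb[OF that \<open>j \<in> {1..N}\<close>] .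
      show "(\<Sum>k=1..N. \<bar>mtr Dmat i k\<bar>) \<le> 2" using D_col[where j=i and N=N] by (simp add: mtr_def)
    qed (use dpos in auto)
    then show ?thesis by simp
  qed
  have WDb: "\<bar>mmult N W Dmat i j\<bar> \<le> 8 * \<delta>" if "i \<in> {1..N}" "j \<in> {1..N}" for i j
  proof -
    have "\<bar>mmult N W Dmat i j\<bar> \<le> (4 * \<delta>) * 2"
    proof (rule bnd_right)
      show "\<bar>W i k\<bar> \<le> 4 * \<delta>" if "k \<in> {1..N}" for k using Wb[OF \<open>i \<in> {1..N}\<close> that] .
      show "(\<Sum>k=1..N. \<bar>Dmat k j\<bar>) \<le> 2" by (rule D_col)
    qed (use dpos in auto)
    then show ?thesis by simp
  qed
  have Xh_eq: "Xh = (\<lambda>i j. X i j + W i j)" by (auto simp: W_def mdiff_def intro!: ext)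
  define F2 where "F2 = (\<Sum>i=1..N. \<Sum>j=1..N. (W i j)\<^sup>2)"
  have F2_le: "F2 \<le> \<delta> * (l1norm N (mmult N (mtr Dmat) W) + l1norm N (mmult N W Dmat))"
  proof -
    define M where "M = mmult N (mmult N (mtr Dmat) W) Dmat"
    have "F2 = inner N W (mmult N (mmult N Dmat V) (mtr Dmat))"
      unfolding F2_def inner_def by (intro sum.cong refl) (simp add: WV power2_eq_square)
    also have "\<dots> = inner N W (mmult N Dmat (mmult N V (mtr Dmat)))" by (simp add: mmult_assoc)
    also have "\<dots> = inner N M V" by (subst inner_left, subst inner_right) (simp add: M_def)
    also have "\<dots> \<le> \<delta> * l1norm N M" by (rule inner_bound) (rule Vb)
    finally have 1: "F2 \<le> \<delta> * l1norm N M" .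
    have 2: "l1norm N M \<le> 2 * l1norm N (mmult N (mtr Dmat) W)"
      unfolding M_def by (rule l1_right) (rule D_row)
    have 3: "l1norm N M \<le> 2 * l1norm N (mmult N W Dmat)"
      unfolding M_def mmult_assoc by (rule l1_left) (use D_row in \<open>simp add: mtr_def\<close>)
    have "l1norm N M \<le> l1norm N (mmult N (mtr Dmat) W) + l1norm N (mmult N W Dmat)"
      using 2 3 by linarith
    then show ?thesis using 1 dpos by (meson mult_left_mono less_imp_le order_trans)
  qed
  have key: "F2 / \<delta> - 32 * \<delta> * real s \<le> 2 * a + 2 * b"
    if a: "a \<in> {l1norm N (mdiff (mmult N (mtr Dmat) X) Y) | Y. card {(i,j) \<in> {1..N} \<times> {1..N}. Y i j \<noteq> 0} \<le> s}"
    and b: "b \<in> {l1norm N (mdiff (mmult N X Dmat) Y) | Y. card {(i,j) \<in> {1..N} \<times> {1..N}. Y i j \<noteq> 0} \<le> s}"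
    for a b
  proof -
    obtain Y1 where Y1: "card {(i,j) \<in> {1..N} \<times> {1..N}. Y1 i j \<noteq> 0} \<le> s"
      and a_eq: "a = l1norm N (mdiff (mmult N (mtr Dmat) X) Y1)" using a by blast
    obtain Y2 where Y2: "card {(i,j) \<in> {1..N} \<times> {1..N}. Y2 i j \<noteq> 0} \<le> s"
      and b_eq: "b = l1norm N (mdiff (mmult N X Dmat) Y2)" using b by blast
    have c1: "l1norm N (mmult N (mtr Dmat) W) \<le> l1norm N (mmult N (mtr Dmat) Xh)
        - l1norm N (mmult N (mtr Dmat) X) + 2 * a + 2 * (8 * \<delta>) * real s"
      unfolding a_eq Xh_eq mmult_add_right
      by (rule cone[OF DtWb _ Y1]) (use dpos in auto)
    have c2: "l1norm N (mmult N W Dmat) \<le> l1norm N (mmult N Xh Dmat)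
        - l1norm N (mmult N X Dmat) + 2 * b + 2 * (8 * \<delta>) * real s"
      unfolding b_eq Xh_eq mmult_add_left
      by (rule cone[OF WDb _ Y2]) (use dpos in auto)
    have "F2 \<le> \<delta> * (32 * \<delta> * real s + 2 * a + 2 * b)"
    proof -
      have "l1norm N (mmult N (mtr Dmat) W) + l1norm N (mmult N W Dmat) \<le> 32 * \<delta> * real s + 2 * a + 2 * b"
        using c1 c2 tv unfolding tv_obj_def by linarith
      then show ?thesis using F2_le dpos by (meson mult_left_mono less_imp_le order_trans)
    qed
    then show ?thesis using dpos by (simp add: field_simps)
  qed
  have "F2 / \<delta> - 32 * \<delta> * real s \<le> 2 * sigma_s N s (mmult N (mtr Dmat) X) + 2 * sigma_s N s (mmult N X Dmat)"
    unfolding sigma_s_def by (rule inf2[OF sigma_ne sigma_ne key])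
  then have "F2 \<le> \<delta> * (32 * \<delta> * real s + 2 * sigma_s N s (mmult N (mtr Dmat) X) + 2 * sigma_s N s (mmult N X Dmat))"
    using dpos by (simp add: field_simps)
  then have "sqrt F2 \<le> 6 * (sqrt (real s) * sqrt \<delta> + sqrt (sigma_s N s (mmult N (mtr Dmat) X))
                + sqrt (sigma_s N s (mmult N X Dmat))) * sqrt \<delta>"
    by (rule final_arith[OF dpos sigma_nonneg sigma_nonneg])
  then show ?thesis unfolding frob_def F2_def W_def .
qed


theorem theorem4:
  shows "\<exists>C::real. \<forall>(N::nat) (\<delta>::real) (A::real set) (QA::real \<Rightarrow> real)
            (X::nat \<Rightarrow> nat \<Rightarrow> real) (Xh::nat \<Rightarrow> nat \<Rightarrow> real) (s::nat).
      \<delta> > 0 \<longrightarrow> step_alphabet \<delta> A \<longrightarrow> nearest_quantizer A QA \<longrightarrow>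
      (\<forall>i\<in>{1..N}. \<forall>j\<in>{1..N}. 0 \<le> X i j \<and> X i j \<le> 1) \<longrightarrow>
      (\<forall>i\<in>{1..N}. \<forall>j\<in>{1..N}. mdiff X (sd_q QA X) i j
          = mmult N (mmult N Dmat (sd_state QA X)) (mtr Dmat) i j) \<longrightarrow>
      maxnorm N (sd_state QA X) \<le> \<delta> / 2 \<longrightarrow>
      feasible N \<delta> (sd_q QA X) Xh \<longrightarrow>
      (\<forall>Z. feasible N \<delta> (sd_q QA X) Z \<longrightarrow> tv_obj N Xh \<le> tv_obj N Z) \<longrightarrow>
      1 \<le> s \<longrightarrow> s \<le> N\<^sup>2 \<longrightarrow>
      frob N (mdiff Xh X)
        \<le> C * (sqrt (real s) * sqrt \<delta> + sqrt (sigma_s N s (mmult N (mtr Dmat) X))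
                + sqrt (sigma_s N s (mmult N X Dmat))) * sqrt \<delta>"
proof (rule exI[of _ 6], intro allI impI)
  fix N :: nat and \<delta> :: real and A :: "real set" and QA :: "real \<Rightarrow> real"
    and X Xh :: "nat \<Rightarrow> nat \<Rightarrow> real" and s :: nat
  assume h: "\<delta> > 0" "step_alphabet \<delta> A" "nearest_quantizer A QA"
    "\<forall>i\<in>{1..N}. \<forall>j\<in>{1..N}. 0 \<le> X i j \<and> X i j \<le> 1"
    "\<forall>i\<in>{1..N}. \<forall>j\<in>{1..N}. mdiff X (sd_q QA X) i j
          = mmult N (mmult N Dmat (sd_state QA X)) (mtr Dmat) i j"
    "maxnorm N (sd_state QA X) \<le> \<delta> / 2"
    "feasible N \<delta> (sd_q QA X) Xh"
    "\<forall>Z. feasible N \<delta> (sd_q QA X) Z \<longrightarrow> tv_obj N Xh \<le> tv_obj N Z"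
    "1 \<le> s" "s \<le> N\<^sup>2"
  show "frob N (mdiff Xh X)
        \<le> 6 * (sqrt (real s) * sqrt \<delta> + sqrt (sigma_s N s (mmult N (mtr Dmat) X))
                + sqrt (sigma_s N s (mmult N X Dmat))) * sqrt \<delta>"
    by (rule sd_main_bound[OF h(1) h(5) h(6) h(7) h(8)]) (use h in simp_all)
qed

end
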